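(* For a connected scalar Feynman graph $G$ with $n+1$ vertices ($n\ge1$) and $I$ internal lines, the function $D_R(p,E,T)$ produced by the OFPT-rules satisfies $$D_R(p,E,T)=\hat O(E,T)\,D_0(p,E),\qquad \hat O(E,T)=\sum_{J}\ \prod_{j\in J}n(E_j)\,(1+\mathcal{S}_j),$$ where the sum runs over all subsets $J\subseteq\{1,\dots,I\}$ (including $J=\emptyset$, contributing the identity) such that the graph obtained from $G$ by deleting all internal lines in $J$ is still connected (such $J$ have at most $L=I-n$ elements).
   Context: Setting: $T>0$, $n(E)=(e^{E/T}-1)^{-1}$. Each external line $l$ of $G$ carries a real Euclidean 4-vector $(p_l,\mathbf p_l)$ and is assigned energy $ip_l$; each internal line $i$ carries 3-momentum $\mathbf k_i$ and is assigned energy $E_i=(\mathbf k_i^2+m_i^2)^{1/2}$. OFPT-rules: (b) fix a time direction and consider all $(n+1)!$ orderings of the vertices along it. (c) For each time-ordered graph consider, besides itself, all connected graphs obtained by snipping any set of internal lines; a snipped line $i$ becomes a pair of "thermal legs" attached at its two endpoint vertices, both carrying energy $E_i$, one oriented incoming and the other outgoing; both orientations are considered, each giving a different diagram. (d) For such a diagram, a thermal pair is called external if its incoming leg joins the diagram (in the time ordering) before its outgoing partner, and internal otherwise. Let $E_{inc}$ be the sum of all incoming external energies plus the energies of the incoming legs of all external thermal pairs. The diagram's value is the product of: for each of the $n$ vertical cuts between consecutive time-ordered vertices, a factor $1/(E_{inc}-E_{cut})$, where $E_{cut}$ is the sum of the energies of all lines crossing the cut (as in zero-temperature time-ordered perturbation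 theory) plus the energies of all internal thermal pairs whose originating internal line would have crossed the cut; a factor $n(E_i)$ for each thermal pair; and an overall factor $(-1)^n$. (e) $D_R(p,E,T)$ is the sum of these values over all diagrams in (c). $D_0(p,E):=D_R(p,E,0)$, i.e. the sum over the unsnipped time-ordered diagrams with the weights of rule (d) (the zero-temperature Euclidean $D$-function computed by old-fashioned perturbation theory), regarded as a function of independent variables $E_1,\dots,E_I$. $\mathcal{S}_j$ is the reflection $E_j\mapsto -E_j$ acting on $D_0$; the factors $n(E_j)$ are multiplicative constants. *)

theory Defs
  imports "HOL-Analysis.Analysis" "HOL-Combinatorics.Permutations" "HOL-Library.FuncSet"
begin

text \<open>A scalar Feynman graph: vertices 0..nv (so nv = n, i.e. n+1 vertices),
  internal lines 0..<nl (I lines) with endpoints src/tgt (the orientation of a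
  line is only a labelling of its two endpoints), external lines 0..<nex, line l
  attached to vertex exv l.  All external lines are taken as incoming with
  energy i*p_l (an outgoing line is an incoming one with reversed momentum).\<close>

record fgraph =
  nv  :: nat
  nl  :: nat
  src :: "nat \<Rightarrow> nat"
  tgt :: "nat \<Rightarrow> nat"
  nex :: nat
  exv :: "nat \<Rightarrow> nat"

definition well_formed :: "fgraph \<Rightarrow> bool" where
  "well_formed G \<longleftrightarrow> 1 \<le> nv G \<and>
     (\<forall>i<nl G. src G i \<le> nv G \<and> tgt G i \<le> nv G) \<and>
     (\<forall>l<nex G. exv G l \<le> nv G)"

definition bose :: "real \<Rightarrow> real \<Rightarrow> real" where
  "bose T x = 1 / (exp (x / T) - 1)"

definition adj :: "fgraph \<Rightarrow> nat set \<Rightarrow> nat \<Rightarrow> nat \<Rightarrow> bool" where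
  "adj G S a b \<longleftrightarrow> (\<exists>i\<in>S. (src G i = a \<and> tgt G i = b) \<or> (src G i = b \<and> tgt G i = a))"

definition connected_lines :: "fgraph \<Rightarrow> nat set \<Rightarrow> bool" where
  "connected_lines G S \<longleftrightarrow> (\<forall>a\<le>nv G. \<forall>b\<le>nv G. (adj G S)\<^sup>*\<^sup>* a b)"

definition admissible :: "fgraph \<Rightarrow> nat set set" where
  "admissible G = {J. J \<subseteq> {..<nl G} \<and> connected_lines G ({..<nl G} - J)}"

text \<open>Time orderings: \<pi> v is the position of vertex v; all (n+1)! of them.\<close>
definition orderings :: "fgraph \<Rightarrow> (nat \<Rightarrow> nat) set" where
  "orderings G = {\<pi>. \<pi> permutes {..nv G}}"

text \<open>Cut k (k < n) separates positions 0..k from k+1..n.\<close>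
definition crosses :: "fgraph \<Rightarrow> (nat \<Rightarrow> nat) \<Rightarrow> nat \<Rightarrow> nat \<Rightarrow> bool" where
  "crosses G \<pi> k i \<longleftrightarrow> ((\<pi> (src G i) \<le> k) \<noteq> (\<pi> (tgt G i) \<le> k))"

text \<open>Orientation ori j of a snipped line j: True = incoming leg at src, outgoing at tgt.\<close>
definition in_v :: "fgraph \<Rightarrow> (nat \<Rightarrow> bool) \<Rightarrow> nat \<Rightarrow> nat" where
  "in_v G ori j = (if ori j then src G j else tgt G j)"

definition out_v :: "fgraph \<Rightarrow> (nat \<Rightarrow> bool) \<Rightarrow> nat \<Rightarrow> nat" where
  "out_v G ori j = (if ori j then tgt G j else src G j)"

text \<open>External thermal pair: incoming leg joins strictly before its outgoing partner.\<close>
definition ext_pair :: "fgraph \<Rightarrow> (nat \<Rightarrow> nat) \<Rightarrow> (nat \<Rightarrow> bool) \<Rightarrow> nat \<Rightarrow> bool" where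
  "ext_pair G \<pi> ori j \<longleftrightarrow> \<pi> (in_v G ori j) < \<pi> (out_v G ori j)"

definition E_inc :: "fgraph \<Rightarrow> (nat \<Rightarrow> real \<times> (real^3)) \<Rightarrow> (nat \<Rightarrow> real)
    \<Rightarrow> (nat \<Rightarrow> nat) \<Rightarrow> nat set \<Rightarrow> (nat \<Rightarrow> bool) \<Rightarrow> complex" where
  "E_inc G p E \<pi> J ori =
     (\<Sum>l<nex G. \<i> * of_real (fst (p l))) +
     (\<Sum>j\<in>{j\<in>J. ext_pair G \<pi> ori j}. of_real (E j))"

text \<open>Energy of all lines crossing cut k: unsnipped internal lines crossing the cut,
  internal thermal pairs whose original line crosses the cut, external lines not yet
  absorbed, and legs of external thermal pairs (incoming legs not yet absorbed,
  outgoing legs already emitted), exactly as external lines in time-ordered PT.\<close>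
definition E_cut :: "fgraph \<Rightarrow> (nat \<Rightarrow> real \<times> (real^3)) \<Rightarrow> (nat \<Rightarrow> real)
    \<Rightarrow> (nat \<Rightarrow> nat) \<Rightarrow> nat set \<Rightarrow> (nat \<Rightarrow> bool) \<Rightarrow> nat \<Rightarrow> complex" where
  "E_cut G p E \<pi> J ori k =
     (\<Sum>i\<in>{i\<in>{..<nl G} - J. crosses G \<pi> k i}. of_real (E i)) +
     (\<Sum>j\<in>{j\<in>J. \<not> ext_pair G \<pi> ori j \<and> crosses G \<pi> k j}. of_real (E j)) +
     (\<Sum>l\<in>{l\<in>{..<nex G}. k < \<pi> (exv G l)}. \<i> * of_real (fst (p l))) +
     (\<Sum>j\<in>{j\<in>J. ext_pair G \<pi> ori j \<and> k < \<pi> (in_v G ori j)}. of_real (E j)) +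
     (\<Sum>j\<in>{j\<in>J. ext_pair G \<pi> ori j \<and> \<pi> (out_v G ori j) \<le> k}. of_real (E j))"

definition denom_part :: "fgraph \<Rightarrow> (nat \<Rightarrow> real \<times> (real^3)) \<Rightarrow> (nat \<Rightarrow> real)
    \<Rightarrow> (nat \<Rightarrow> nat) \<Rightarrow> nat set \<Rightarrow> (nat \<Rightarrow> bool) \<Rightarrow> complex" where
  "denom_part G p E \<pi> J ori =
     (-1) ^ nv G * (\<Prod>k<nv G. 1 / (E_inc G p E \<pi> J ori - E_cut G p E \<pi> J ori k))"

definition diag_value :: "fgraph \<Rightarrow> (nat \<Rightarrow> real \<times> (real^3)) \<Rightarrow> (nat \<Rightarrow> real) \<Rightarrow> real
    \<Rightarrow> (nat \<Rightarrow> nat) \<Rightarrow> nat set \<Rightarrow> (nat \<Rightarrow> bool) \<Rightarrow> complex" where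
  "diag_value G p E T \<pi> J ori =
     denom_part G p E \<pi> J ori * of_real (\<Prod>j\<in>J. bose T (E j))"

definition D_R :: "fgraph \<Rightarrow> (nat \<Rightarrow> real \<times> (real^3)) \<Rightarrow> (nat \<Rightarrow> real) \<Rightarrow> real \<Rightarrow> complex" where
  "D_R G p E T =
     (\<Sum>\<pi>\<in>orderings G. \<Sum>J\<in>admissible G. \<Sum>ori\<in>J \<rightarrow>\<^sub>E (UNIV :: bool set).
        diag_value G p E T \<pi> J ori)"

text \<open>D_0: sum over the unsnipped time-ordered diagrams, as a function of independent
  real energy variables E.\<close>
definition D_0 :: "fgraph \<Rightarrow> (nat \<Rightarrow> real \<times> (real^3)) \<Rightarrow> (nat \<Rightarrow> real) \<Rightarrow> complex" where
  "D_0 G p E = (\<Sum>\<pi>\<in>orderings G. denom_part G p E \<pi> {} (\<lambda>_. False))"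

definition reflect :: "nat set \<Rightarrow> (nat \<Rightarrow> real) \<Rightarrow> (nat \<Rightarrow> real)" where
  "reflect K E = (\<lambda>i. if i \<in> K then - E i else E i)"

text \<open>The operator O(E,T) applied to a function f of the energy variables:
  \<Prod>_{j\<in>J} n(E_j)(1+S_j) f = (\<Prod>_{j\<in>J} n(E_j)) \<Sum>_{K\<subseteq>J} f \<circ> S_K,
  the n(E_j) being constants evaluated at the unreflected energies.\<close>
definition O_hat :: "fgraph \<Rightarrow> (nat \<Rightarrow> real) \<Rightarrow> real \<Rightarrow> ((nat \<Rightarrow> real) \<Rightarrow> complex) \<Rightarrow> complex" where
  "O_hat G E T f =
     (\<Sum>J\<in>admissible G. of_real (\<Prod>j\<in>J. bose T (E j)) * (\<Sum>K\<in>Pow J. f (reflect K E)))"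

end

theory Submission
  imports Defs
begin

lemma cut_eq:
  fixes E :: "nat \<Rightarrow> real" and \<pi> :: "nat \<Rightarrow> nat" and ori :: "nat \<Rightarrow> bool"
  assumes J: "J \<subseteq> {..<nl G}"
  defines "E' \<equiv> reflect {j\<in>J. ext_pair G \<pi> ori j} E"
  shows "E_inc G p E \<pi> J ori - E_cut G p E \<pi> J ori k
       = E_inc G p E' \<pi> {} (\<lambda>_. False) - E_cut G p E' \<pi> {} (\<lambda>_. False) k"
proof -
  let ?N = "{..<nl G}"
  let ?ext = "ext_pair G \<pi> ori"
  let ?cr = "crosses G \<pi> k"
  have fin: "finite ?N" by simp
  have filt: "\<And>Q. {j\<in>J. Q j} = {i\<in>?N. i \<in> J \<and> Q i}" using J by auto
  have s1: "(\<Sum>j\<in>{j\<in>J. ?ext j}. complex_of_real (E j)) = (\<Sum>i\<in>?N. if i \<in> J \<and> ?ext i then complex_of_real (E i) else 0)"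
    by (subst filt, rule sum.inter_filter, simp)
  have s2: "(\<Sum>i\<in>{i\<in>?N - J. ?cr i}. complex_of_real (E i)) = (\<Sum>i\<in>?N. if i \<notin> J \<and> ?cr i then complex_of_real (E i) else 0)"
    by (subst sum.inter_filter[symmetric], simp) (rule sum.cong, auto)
  have s3: "(\<Sum>j\<in>{j\<in>J. \<not> ?ext j \<and> ?cr j}. complex_of_real (E j)) = (\<Sum>i\<in>?N. if i \<in> J \<and> \<not> ?ext i \<and> ?cr i then complex_of_real (E i) else 0)"
    by (subst filt, rule sum.inter_filter, simp)
  have s4: "(\<Sum>j\<in>{j\<in>J. ?ext j \<and> k < \<pi> (in_v G ori j)}. complex_of_real (E j)) = (\<Sum>i\<in>?N. if i \<in> J \<and> ?ext i \<and> k < \<pi> (in_v G ori i) then complex_of_real (E i) else 0)"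
    by (subst filt, rule sum.inter_filter, simp)
  have s5: "(\<Sum>j\<in>{j\<in>J. ?ext j \<and> \<pi> (out_v G ori j) \<le> k}. complex_of_real (E j)) = (\<Sum>i\<in>?N. if i \<in> J \<and> ?ext i \<and> \<pi> (out_v G ori i) \<le> k then complex_of_real (E i) else 0)"
    by (subst filt, rule sum.inter_filter, simp)
  have s6: "(\<Sum>i\<in>{i\<in>?N - {}. ?cr i}. complex_of_real (E' i)) = (\<Sum>i\<in>?N. if ?cr i then complex_of_real (E' i) else 0)"
    by (subst sum.inter_filter[symmetric], simp) (rule sum.cong, auto)
  have pw: "(\<Sum>i\<in>?N. if ?cr i then complex_of_real (E' i) else 0) =
     (\<Sum>i\<in>?N. (if i \<notin> J \<and> ?cr i then complex_of_real (E i) else 0)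
       + (if i \<in> J \<and> \<not> ?ext i \<and> ?cr i then complex_of_real (E i) else 0)
       - (if i \<in> J \<and> ?ext i then complex_of_real (E i) else 0)
       + (if i \<in> J \<and> ?ext i \<and> k < \<pi> (in_v G ori i) then complex_of_real (E i) else 0)
       + (if i \<in> J \<and> ?ext i \<and> \<pi> (out_v G ori i) \<le> k then complex_of_real (E i) else 0))"
  proof (rule sum.cong[OF refl])
    fix i
    show "(if ?cr i then complex_of_real (E' i) else 0) =
       (if i \<notin> J \<and> ?cr i then complex_of_real (E i) else 0)
       + (if i \<in> J \<and> \<not> ?ext i \<and> ?cr i then complex_of_real (E i) else 0)
       - (if i \<in> J \<and> ?ext i then complex_of_real (E i) else 0)
       + (if i \<in> J \<and> ?ext i \<and> k < \<pi> (in_v G ori i) then complex_of_real (E i) else 0)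
       + (if i \<in> J \<and> ?ext i \<and> \<pi> (out_v G ori i) \<le> k then complex_of_real (E i) else 0)"
      unfolding E'_def reflect_def crosses_def ext_pair_def in_v_def out_v_def
      by (cases "ori i") auto
  qed
  show ?thesis
    unfolding E_inc_def E_cut_def
    apply (simp only: s1 s2 s3 s4 s5 s6 pw)
    apply (simp add: sum.distrib sum_subtractf)
    done
qed

lemma sum_ori:
  fixes g :: "nat set \<Rightarrow> complex" and e :: "nat \<Rightarrow> bool \<Rightarrow> bool"
  assumes "finite J"
    and "\<forall>j\<in>J. e j True \<noteq> e j False \<or> (\<not> e j True \<and> \<not> e j False \<and> (\<forall>K. g (insert j K) = g (K - {j})))"
  shows "(\<Sum>ori\<in>J \<rightarrow>\<^sub>E (UNIV::bool set). g {j\<in>J. e j (ori j)}) = (\<Sum>K\<in>Pow J. g K)"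
  using assms
proof (induction J arbitrary: g rule: finite_induct)
  case empty
  then show ?case by simp
next
  case (insert a J)
  define gy where "gy y K = g (if e a y then insert a K else K)" for y K
  have IH: "(\<Sum>h\<in>J \<rightarrow>\<^sub>E (UNIV::bool set). gy y {j\<in>J. e j (h j)}) = (\<Sum>K\<in>Pow J. gy y K)" for y
  proof (rule insert.IH)
    show "\<forall>j\<in>J. e j True \<noteq> e j False \<or> (\<not> e j True \<and> \<not> e j False \<and> (\<forall>K. gy y (insert j K) = gy y (K - {j})))"
    proof
      fix j assume j: "j \<in> J"
      then have ja: "j \<noteq> a" using insert.hyps by auto
      from insert.prems j have "e j True \<noteq> e j False \<or> (\<not> e j True \<and> \<not> e j False \<and> (\<forall>K. g (insert j K) = g (K - {j})))" by auto
      then show "e j True \<noteq> e j False \<or> (\<not> e j True \<and> \<not> e j False \<and> (\<forall>K. gy y (insert j K) = gy y (K - {j})))"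
      proof (elim disjE)
        assume h: "\<not> e j True \<and> \<not> e j False \<and> (\<forall>K. g (insert j K) = g (K - {j}))"
        have "gy y (insert j K) = gy y (K - {j})" for K
        proof (cases "e a y")
          case True
          have "gy y (insert j K) = g (insert j (insert a K))" using True by (simp add: gy_def insert_commute)
          also have "\<dots> = g (insert a K - {j})" using h by blast
          also have "insert a K - {j} = insert a (K - {j})" using ja by auto
          finally show ?thesis using True by (simp add: gy_def)
        next
          case False
          then show ?thesis using h by (simp add: gy_def)
        qed
        then show ?thesis using h by blast
      qed simp
    qed
  qed
  have eqset: "{j\<in>insert a J. e j ((h(a:=y)) j)} = (if e a y then insert a {j\<in>J. e j (h j)} else {j\<in>J. e j (h j)})" for h y
    using insert.hyps by auto
  have "(\<Sum>ori\<in>insert a J \<rightarrow>\<^sub>E (UNIV::bool set). g {j\<in>insert a J. e j (ori j)})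
      = (\<Sum>(y,h)\<in>UNIV \<times> (J \<rightarrow>\<^sub>E (UNIV::bool set)). g {j\<in>insert a J. e j ((h(a:=y)) j)})"
    unfolding PiE_insert_eq
    by (subst sum.reindex) (auto intro!: inj_combinator simp: insert.hyps case_prod_beta)
  also have "\<dots> = (\<Sum>y\<in>UNIV. \<Sum>h\<in>J \<rightarrow>\<^sub>E (UNIV::bool set). gy y {j\<in>J. e j (h j)})"
    unfolding sum.cartesian_product[symmetric] gy_def
    by (intro sum.cong refl) (simp only: eqset)
  also have "\<dots> = (\<Sum>y\<in>UNIV. \<Sum>K\<in>Pow J. gy y K)" by (simp add: IH)
  also have "\<dots> = (\<Sum>K\<in>Pow J. gy True K) + (\<Sum>K\<in>Pow J. gy False K)"
    by (simp add: UNIV_bool)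
  also have "\<dots> = (\<Sum>K\<in>Pow J. g K) + (\<Sum>K\<in>Pow J. g (insert a K))"
  proof -
    from insert.prems have ha: "e a True \<noteq> e a False \<or> (\<not> e a True \<and> \<not> e a False \<and> (\<forall>K. g (insert a K) = g (K - {a})))" by auto
    have nin: "K \<in> Pow J \<Longrightarrow> K - {a} = K" for K using insert.hyps by auto
    from ha show ?thesis
    proof (elim disjE)
      assume "e a True \<noteq> e a False"
      then show ?thesis by (cases "e a True") (simp_all add: gy_def add.commute)
    next
      assume h: "\<not> e a True \<and> \<not> e a False \<and> (\<forall>K. g (insert a K) = g (K - {a}))"
      have "(\<Sum>K\<in>Pow J. g (insert a K)) = (\<Sum>K\<in>Pow J. g K)"
        using h nin by (intro sum.cong) auto
      then show ?thesis using h by (simp add: gy_def)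
    qed
  qed
  also have "\<dots> = (\<Sum>K\<in>Pow (insert a J). g K)"
  proof -
    have "(\<Sum>K\<in>Pow (insert a J). g K) = (\<Sum>K\<in>Pow J. g K) + (\<Sum>K\<in>insert a ` Pow J. g K)"
      unfolding Pow_insert by (rule sum.union_disjoint) (use insert.hyps in auto)
    also have "(\<Sum>K\<in>insert a ` Pow J. g K) = (\<Sum>K\<in>Pow J. g (insert a K))"
    proof (rule sum.reindex_cong[of "insert a"])
      show "inj_on (insert a) (Pow J)" unfolding inj_on_def using insert.hyps
        by (metis PowD insert_ident subsetD)
    qed auto
    finally show ?thesis by simp
  qed
  finally show ?case .
qed

lemma denom_key:
  assumes J: "J \<subseteq> {..<nl G}"
  shows "denom_part G p E \<pi> J ori = denom_part G p (reflect {j\<in>J. ext_pair G \<pi> ori j} E) \<pi> {} (\<lambda>_. False)"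
  unfolding denom_part_def using cut_eq[OF J] by simp

lemma loop_inv:
  assumes "src G j = tgt G j"
  shows "denom_part G p (reflect (insert j K) E) \<pi> {} ori = denom_part G p (reflect (K - {j}) E) \<pi> {} ori"
proof -
  have "E_cut G p (reflect (insert j K) E) \<pi> {} ori k = E_cut G p (reflect (K - {j}) E) \<pi> {} ori k" for k
  proof -
    have "(\<Sum>i\<in>{i\<in>{..<nl G} - {}. crosses G \<pi> k i}. complex_of_real (reflect (insert j K) E i))
        = (\<Sum>i\<in>{i\<in>{..<nl G} - {}. crosses G \<pi> k i}. complex_of_real (reflect (K - {j}) E i))"
    proof (rule sum.cong[OF refl])
      fix i assume "i \<in> {i\<in>{..<nl G} - {}. crosses G \<pi> k i}"
      then have "i \<noteq> j" using assms by (auto simp: crosses_def)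
      then show "complex_of_real (reflect (insert j K) E i) = complex_of_real (reflect (K - {j}) E i)"
        by (simp add: reflect_def)
    qed
    then show ?thesis unfolding E_cut_def by simp
  qed
  moreover have "E_inc G p (reflect (insert j K) E) \<pi> {} ori = E_inc G p (reflect (K - {j}) E) \<pi> {} ori"
    unfolding E_inc_def by simp
  ultimately show ?thesis unfolding denom_part_def by simp
qed

lemma sum_ori_pi:
  assumes wf: "well_formed G" and pi: "\<pi> \<in> orderings G" and J: "J \<subseteq> {..<nl G}"
  shows "(\<Sum>ori\<in>J \<rightarrow>\<^sub>E (UNIV :: bool set). denom_part G p E \<pi> J ori)
       = (\<Sum>K\<in>Pow J. denom_part G p (reflect K E) \<pi> {} (\<lambda>_. False))"
proof -
  define e where "e j b = (if b then \<pi> (src G j) < \<pi> (tgt G j) else \<pi> (tgt G j) < \<pi> (src G j))" for j b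
  define g where "g K = denom_part G p (reflect K E) \<pi> {} (\<lambda>_. False)" for K
  have fin: "finite J" using J finite_subset by blast
  have ext: "ext_pair G \<pi> ori j = e j (ori j)" for ori j
    by (simp add: ext_pair_def in_v_def out_v_def e_def)
  have inj: "inj_on \<pi> {..nv G}" using pi unfolding orderings_def by (auto intro: permutes_inj_on)
  have cond: "\<forall>j\<in>J. e j True \<noteq> e j False \<or> (\<not> e j True \<and> \<not> e j False \<and> (\<forall>K. g (insert j K) = g (K - {j})))"
  proof
    fix j assume "j \<in> J"
    then have "src G j \<le> nv G" "tgt G j \<le> nv G" using J wf unfolding well_formed_def by auto
    show "e j True \<noteq> e j False \<or> (\<not> e j True \<and> \<not> e j False \<and> (\<forall>K. g (insert j K) = g (K - {j})))"
    proof (cases "src G j = tgt G j")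
      case True
      then show ?thesis unfolding g_def e_def using loop_inv[OF True] by simp
    next
      case False
      then have "\<pi> (src G j) \<noteq> \<pi> (tgt G j)" using inj \<open>src G j \<le> nv G\<close> \<open>tgt G j \<le> nv G\<close>
        by (meson atMost_iff inj_on_contraD)
      then show ?thesis unfolding e_def by auto
    qed
  qed
  have "(\<Sum>ori\<in>J \<rightarrow>\<^sub>E (UNIV :: bool set). denom_part G p E \<pi> J ori)
      = (\<Sum>ori\<in>J \<rightarrow>\<^sub>E (UNIV :: bool set). g {j\<in>J. e j (ori j)})"
    unfolding g_def by (intro sum.cong refl) (simp add: denom_key[OF J] ext)
  also have "\<dots> = (\<Sum>K\<in>Pow J. g K)" by (rule sum_ori[OF fin cond])
  finally show ?thesis unfolding g_def .
qed

theorem theorem1: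
  fixes G :: fgraph and p :: "nat \<Rightarrow> real \<times> (real^3)"
    and k :: "nat \<Rightarrow> real^3" and m :: "nat \<Rightarrow> real" and T :: real
  assumes "well_formed G" and "connected_lines G {..<nl G}" and "T > 0"
  defines "E \<equiv> (\<lambda>i. sqrt ((norm (k i))\<^sup>2 + (m i)\<^sup>2))"
  shows "D_R G p E T = O_hat G E T (D_0 G p)"
proof -
  have finA: "finite (admissible G)"
    by (rule finite_subset[of _ "Pow {..<nl G}"]) (auto simp: admissible_def)
  have finO: "finite (orderings G)"
    unfolding orderings_def by (rule finite_permutations) simp
  have "D_R G p E T = (\<Sum>\<pi>\<in>orderings G. \<Sum>J\<in>admissible G.
      of_real (\<Prod>j\<in>J. bose T (E j)) * (\<Sum>K\<in>Pow J. denom_part G p (reflect K E) \<pi> {} (\<lambda>_. False)))"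
    unfolding D_R_def diag_value_def
  proof (intro sum.cong refl)
    fix \<pi> J assume pi: "\<pi> \<in> orderings G" and J: "J \<in> admissible G"
    have Jsub: "J \<subseteq> {..<nl G}" using J by (simp add: admissible_def)
    show "(\<Sum>ori\<in>J \<rightarrow>\<^sub>E UNIV. denom_part G p E \<pi> J ori * complex_of_real (\<Prod>j\<in>J. bose T (E j))) =
         complex_of_real (\<Prod>j\<in>J. bose T (E j)) * (\<Sum>K\<in>Pow J. denom_part G p (reflect K E) \<pi> {} (\<lambda>_. False))"
      using sum_ori_pi[OF assms(1) pi Jsub, of p E]
      by (simp only: sum_distrib_right[symmetric] mult.commute)
  qed
  also have "\<dots> = (\<Sum>J\<in>admissible G. \<Sum>\<pi>\<in>orderings G.
      of_real (\<Prod>j\<in>J. bose T (E j)) * (\<Sum>K\<in>Pow J. denom_part G p (reflect K E) \<pi> {} (\<lambda>_. False)))"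
    by (rule sum.swap)
  also have "\<dots> = O_hat G E T (D_0 G p)"
    unfolding O_hat_def D_0_def
    by (simp add: sum_distrib_left[symmetric] sum.swap[of _ "orderings G"])
  finally show ?thesis .
qed

end
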